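(* The function $\tilde G$ attains a global maximum on $K$. Moreover, every global maximizer $\alpha^*=(\alpha_1^*,\dots,\alpha_N^* )$ of $\tilde G$ on $K$ satisfies exactly one of the following: (I) $\alpha^*\in\operatorname{Int}(K)$, i.e. $\alpha_j^*>0$ for all $j$ and $\sum_{j=1}^N\alpha_j^*<1$; or (II) there is $n\in\{1,\dots,N-1\}$ with $\alpha_1^*=\dots=\alpha_n^*=0$ and $(\alpha_{n+1}^*,\dots,\alpha_N^* )\in\operatorname{Int}(K_n)$, where $K_n=\{(\alpha_{n+1},\dots,\alpha_N)\in\mathbb{R}^{N-n}:\alpha_j\ge0\ \forall j,\ \sum_{j=n+1}^N\alpha_j\le1\}$. Consequently $\alpha^*$ solves either the system $\partial\tilde G/\partial\alpha_j(\alpha)=0$ for all $j\in\{1,\dots,N\}$ (case I), or the system $\alpha_1=\dots=\alpha_n=0$, $\alpha_{n+1},\dots,\alpha_N\ne0$, $\partial\tilde G/\partial\alpha_j(\alpha)=0$ for $j\in\{n+1,\dots,N\}$ (case II).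
   Context: Durable-good harvesting model. Let $N\ge1$ be an integer, $y_0>0$, $r,\rho\in\mathbb{R}$, and $0\le t_1<t_2<\dots<t_N$ (arrival times in the successive rounds). Let $K=\{\alpha=(\alpha_1,\dots,\alpha_N)\in\mathbb{R}^N:\alpha_j\ge0\ \forall j,\ \sum_{j=1}^N\alpha_j\le1\}$ and $$\tilde G(\alpha)=\sum_{n=1}^N y_0\,\alpha_n\Big(1-\sum_{i=1}^n\alpha_i\Big)e^{t_n(r-\rho)}\prod_{i=1}^{n-1}(1-\alpha_i).$$ *)

theory Defs
  imports "HOL-Analysis.Analysis"
begin

text \<open>Vectors alpha = (alpha_1,...,alpha_N) are represented as functions nat => real,
  of which only the values at indices 1..N are relevant.\<close>

definition Gt :: "nat \<Rightarrow> real \<Rightarrow> real \<Rightarrow> real \<Rightarrow> (nat \<Rightarrow> real) \<Rightarrow> (nat \<Rightarrow> real) \<Rightarrow> real" where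
  "Gt N y0 r \<rho> t \<alpha> =
     (\<Sum>n=1..N. y0 * \<alpha> n * (1 - (\<Sum>i=1..n. \<alpha> i)) * exp (t n * (r - \<rho>))
                  * (\<Prod>i=1..n-1. (1 - \<alpha> i)))"

definition Kset :: "nat \<Rightarrow> (nat \<Rightarrow> real) set" where
  "Kset N = {\<alpha>. (\<forall>j\<in>{1..N}. 0 \<le> \<alpha> j) \<and> (\<Sum>j=1..N. \<alpha> j) \<le> 1}"

text \<open>Interior of K_n (the coordinates n+1..N); n = 0 gives Int(K).\<close>
definition inIntK :: "nat \<Rightarrow> nat \<Rightarrow> (nat \<Rightarrow> real) \<Rightarrow> bool" where
  "inIntK N n \<alpha> \<longleftrightarrow> (\<forall>j\<in>{n+1..N}. 0 < \<alpha> j) \<and> (\<Sum>j=n+1..N. \<alpha> j) < 1"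

definition partial_zero :: "((nat \<Rightarrow> real) \<Rightarrow> real) \<Rightarrow> nat \<Rightarrow> (nat \<Rightarrow> real) \<Rightarrow> bool" where
  "partial_zero F j \<alpha> \<longleftrightarrow> ((\<lambda>s. F (\<alpha>(j := s))) has_real_derivative 0) (at (\<alpha> j))"

end

theory Submission
  imports Defs
begin

definition SS :: "(nat \<Rightarrow> real) \<Rightarrow> nat \<Rightarrow> real" where "SS a n = (\<Sum>i=1..n. a i)"
definition PI :: "(nat \<Rightarrow> real) \<Rightarrow> nat \<Rightarrow> real" where "PI a n = (\<Prod>i=1..n. (1 - a i))"
definition GG :: "real \<Rightarrow> (nat \<Rightarrow> real) \<Rightarrow> nat \<Rightarrow> (nat \<Rightarrow> real) \<Rightarrow> real" where
  "GG y0 e N a = (\<Sum>n=1..N. y0 * a n * (1 - SS a n) * e n * PI a (n-1))"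

lemma Gt_GG: "Gt N y0 r \<rho> t a = GG y0 (\<lambda>n. exp (t n * (r - \<rho>))) N a"
  unfolding Gt_def GG_def SS_def PI_def ..

lemma SS_Suc: "SS a (Suc n) = SS a n + a (Suc n)" unfolding SS_def by simp
lemma PI_Suc: "PI a (Suc n) = PI a n * (1 - a (Suc n))" unfolding PI_def by simp
lemma SS_0[simp]: "SS a 0 = 0" unfolding SS_def by simp
lemma PI_0[simp]: "PI a 0 = 1" unfolding PI_def by simp

lemma shift_SS_PI:
  assumes "1 \<le> p" "p \<le> q" "\<gamma> q = 0"
    and d: "\<delta> = (\<lambda>i. if i < p then \<gamma> i else if i = p then 0 else if i \<le> q then \<gamma> (i-1) else \<gamma> i)"
  shows "SS \<delta> n = (if n < p then SS \<gamma> n else if n \<le> q then SS \<gamma> (n-1) else SS \<gamma> n)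
       \<and> PI \<delta> n = (if n < p then PI \<gamma> n else if n \<le> q then PI \<gamma> (n-1) else PI \<gamma> n)"
proof (induction n)
  case 0
  then show ?case using assms by simp
next
  case (Suc n)
  consider "Suc n < p" | "Suc n = p" | "p < Suc n" "Suc n \<le> q" | "Suc n = Suc q" | "Suc n > Suc q" by linarith
  then show ?case
  proof cases
    case 1 then show ?thesis using Suc by (simp add: SS_Suc PI_Suc d)
  next
    case 2
    hence pp: "p = Suc n" by simp
    show ?thesis using Suc assms(2) by (simp add: SS_Suc PI_Suc d pp)
  next
    case 3
    then obtain m where m: "n = Suc m" using assms by (cases n) auto
    show ?thesis using Suc 3 by (simp add: SS_Suc PI_Suc d m)
  next
    case 4
    then obtain m where m: "q = Suc m" using assms by (cases q) auto
    show ?thesis using Suc 4 assms by (simp add: SS_Suc PI_Suc d m)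
  next
    case 5 then show ?thesis using Suc assms(2) by (simp add: SS_Suc PI_Suc d)
  qed
qed

lemma sum_split3:
  fixes f :: "nat \<Rightarrow> real"
  assumes "1 \<le> p" "p \<le> q" "q \<le> N"
  shows "sum f {1..N} = sum f {1..p-1} + sum f {p..q} + sum f {Suc q..N}"
proof -
  have "{1..N} = ({1..p-1} \<union> {p..q}) \<union> {Suc q..N}" using assms by auto
  moreover have "({1..p-1} \<union> {p..q}) \<inter> {Suc q..N} = {}" "{1..p-1} \<inter> {p..q} = {}" using assms by auto
  ultimately show ?thesis by (simp add: sum.union_disjoint)
qed

lemma shift_GG:
  assumes "1 \<le> p" "p \<le> q" "q \<le> N" "\<gamma> q = 0"
    and d: "\<delta> = (\<lambda>i. if i < p then \<gamma> i else if i = p then 0 else if i \<le> q then \<gamma> (i-1) else \<gamma> i)"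
  shows "GG y0 e N \<delta> - GG y0 e N \<gamma> = (\<Sum>m=p..q-1. y0 * \<gamma> m * (1 - SS \<gamma> m) * PI \<gamma> (m-1) * (e (Suc m) - e m))"
proof -
  note H = shift_SS_PI[OF assms(1,2,4) d]
  define T where "T = (\<lambda>a n. y0 * a n * (1 - SS a n) * e n * PI a (n-1))"
  have G: "GG y0 e N a = sum (T a) {1..N}" for a unfolding GG_def T_def ..
  obtain q' where q': "q = Suc q'" using assms by (cases q) auto
  have PIq: "PI \<gamma> q = PI \<gamma> q'" using assms(4) by (simp add: q' PI_Suc)
  have p1: "sum (T \<delta>) {1..p-1} = sum (T \<gamma>) {1..p-1}"
  proof (rule sum.cong[OF refl])
    fix n assume n: "n \<in> {1..p-1}"
    hence np: "n < p" "n - 1 < p" using assms by auto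
    hence "SS \<delta> n = SS \<gamma> n" "PI \<delta> (n-1) = PI \<gamma> (n-1)" "\<delta> n = \<gamma> n"
      using H[of n] H[of "n-1"] d by auto
    thus "T \<delta> n = T \<gamma> n" unfolding T_def by simp
  qed
  have p3: "sum (T \<delta>) {Suc q..N} = sum (T \<gamma>) {Suc q..N}"
  proof (rule sum.cong[OF refl])
    fix n assume n: "n \<in> {Suc q..N}"
    hence "SS \<delta> n = SS \<gamma> n" "\<delta> n = \<gamma> n"
      using H[of n] d assms by auto
    moreover have "PI \<delta> (n-1) = PI \<gamma> (n-1)"
    proof (cases "n - 1 = q")
      case True thus ?thesis using H[of "n-1"] assms PIq q' by auto
    next
      case False thus ?thesis using H[of "n-1"] assms n by auto
    qed
    ultimately show "T \<delta> n = T \<gamma> n" unfolding T_def by simp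
  qed
  have "sum (T \<delta>) {p..q} = T \<delta> p + sum (T \<delta>) {Suc p..Suc q'}"
    using assms(2) unfolding q' by (rule sum.atLeast_Suc_atMost)
  also have "T \<delta> p = 0" unfolding T_def using d by simp
  also have "sum (T \<delta>) {Suc p..Suc q'} = sum (\<lambda>m. T \<delta> (Suc m)) {p..q'}"
    by (rule sum.shift_bounds_cl_Suc_ivl)
  also have "\<dots> = (\<Sum>m=p..q'. y0 * \<gamma> m * (1 - SS \<gamma> m) * e (Suc m) * PI \<gamma> (m-1))"
  proof (rule sum.cong[OF refl])
    fix m assume m: "m \<in> {p..q'}"
    hence "SS \<delta> (Suc m) = SS \<gamma> m" "\<delta> (Suc m) = \<gamma> m" "PI \<delta> m = PI \<gamma> (m-1)"
      using H[of "Suc m"] H[of m] d assms q' by auto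
    thus "T \<delta> (Suc m) = y0 * \<gamma> m * (1 - SS \<gamma> m) * e (Suc m) * PI \<gamma> (m-1)" unfolding T_def by simp
  qed
  finally have m\<delta>: "sum (T \<delta>) {p..q} = (\<Sum>m=p..q'. y0 * \<gamma> m * (1 - SS \<gamma> m) * e (Suc m) * PI \<gamma> (m-1))" by simp
  have m\<gamma>: "sum (T \<gamma>) {p..q} = sum (T \<gamma>) {p..q'}"
    using assms by (simp add: q' T_def)
  have "GG y0 e N \<delta> - GG y0 e N \<gamma> = sum (T \<delta>) {p..q} - sum (T \<gamma>) {p..q}"
    unfolding G sum_split3[OF assms(1-3)] using p1 p3 by simp
  also have "\<dots> = (\<Sum>m=p..q'. y0 * \<gamma> m * (1 - SS \<gamma> m) * e (Suc m) * PI \<gamma> (m-1) - T \<gamma> m)"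
    unfolding m\<delta> m\<gamma> sum_subtractf ..
  also have "\<dots> = (\<Sum>m=p..q-1. y0 * \<gamma> m * (1 - SS \<gamma> m) * PI \<gamma> (m-1) * (e (Suc m) - e m))"
    unfolding q' T_def by (intro sum.cong) (auto simp: algebra_simps)
  finally show ?thesis .
qed
lemma shift_SS_N:
  assumes "1 \<le> p" "p \<le> q" "q \<le> N" "\<gamma> q = 0"
    and d: "\<delta> = (\<lambda>i. if i < p then \<gamma> i else if i = p then 0 else if i \<le> q then \<gamma> (i-1) else \<gamma> i)"
  shows "SS \<delta> N = SS \<gamma> N"
proof -
  note H = shift_SS_PI[OF assms(1,2,4) d, of N]
  obtain q' where q': "q = Suc q'" using assms by (cases q) auto
  show ?thesis
  proof (cases "N = q")
    case True thus ?thesis using H assms by (simp add: q' SS_Suc)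
  next
    case False thus ?thesis using H assms by auto
  qed
qed

lemma differentiable_prod_fun:
  fixes f :: "nat \<Rightarrow> real \<Rightarrow> real"
  assumes "finite A" "\<And>i. i \<in> A \<Longrightarrow> f i differentiable (at x)"
  shows "(\<lambda>s. \<Prod>i\<in>A. f i s) differentiable (at x)"
  using assms
proof (induction A rule: finite_induct)
  case empty then show ?case by simp
next
  case (insert a A)
  have "(\<lambda>s. f a s * (\<Prod>i\<in>A. f i s)) differentiable (at x)"
    using insert by (intro differentiable_mult) auto
  thus ?case using insert by simp
qed

lemma GG_differentiable: "(\<lambda>s. GG y0 e N (a(j:=s))) differentiable (at x)"
proof -
  have c: "(\<lambda>s. if i = j then s else a i) differentiable (at x)" for i by (cases "i = j") auto
  show ?thesis unfolding GG_def SS_def PI_def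
    apply (auto intro!: differentiable_sum differentiable_mult differentiable_diff differentiable_prod_fun c)
    done
qed

lemma Kfacts:
  assumes "a \<in> Kset N"
  shows Knn: "\<And>i. i \<in> {1..N} \<Longrightarrow> 0 \<le> a i"
    and Kle: "\<And>i. i \<in> {1..N} \<Longrightarrow> a i \<le> SS a N"
    and KSSle: "\<And>n. n \<le> N \<Longrightarrow> SS a n \<le> SS a N"
    and KSSnn: "\<And>n. n \<le> N \<Longrightarrow> 0 \<le> SS a n"
    and KSS1: "SS a N \<le> 1"
    and KPInn: "\<And>n. n \<le> N \<Longrightarrow> 0 \<le> PI a n"
    and KPIpos: "\<And>n. n \<le> N \<Longrightarrow> SS a N < 1 \<Longrightarrow> 0 < PI a n"
proof -
  show nn: "\<And>i. i \<in> {1..N} \<Longrightarrow> 0 \<le> a i" using assms unfolding Kset_def by auto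
  show le: "\<And>i. i \<in> {1..N} \<Longrightarrow> a i \<le> SS a N" unfolding SS_def using nn by (intro member_le_sum) auto
  show "\<And>n. n \<le> N \<Longrightarrow> SS a n \<le> SS a N" unfolding SS_def using nn by (intro sum_mono2) auto
  show s1: "SS a N \<le> 1" using assms unfolding Kset_def SS_def by auto
  show "\<And>n. n \<le> N \<Longrightarrow> 0 \<le> SS a n" unfolding SS_def using nn by (intro sum_nonneg) auto
  show "\<And>n. n \<le> N \<Longrightarrow> 0 \<le> PI a n" unfolding PI_def
  proof (intro prod_nonneg)
    fix n i assume "n \<le> N" "i \<in> {1..n}"
    thus "0 \<le> 1 - a i" using le[of i] s1 by auto
  qed
  show "\<And>n. n \<le> N \<Longrightarrow> SS a N < 1 \<Longrightarrow> 0 < PI a n" unfolding PI_def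
  proof (intro prod_pos)
    fix n i assume "n \<le> N" "SS a N < 1" "i \<in> {1..n}"
    thus "0 < 1 - a i" using le[of i] by auto
  qed
qed

lemma SS_extend:
  assumes "m \<le> n" "\<And>i. m < i \<Longrightarrow> i \<le> n \<Longrightarrow> a i = 0"
  shows "SS a n = SS a m"
  using assms
proof (induction n rule: dec_induct)
  case base then show ?case by simp
next
  case (step n) then show ?case by (simp add: SS_Suc)
qed

lemma SS_cong: "(\<And>i. 1 \<le> i \<Longrightarrow> i \<le> n \<Longrightarrow> a i = b i) \<Longrightarrow> SS a n = SS b n"
  unfolding SS_def by (intro sum.cong) auto
lemma PI_cong: "(\<And>i. 1 \<le> i \<Longrightarrow> i \<le> n \<Longrightarrow> a i = b i) \<Longrightarrow> PI a n = PI b n"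
  unfolding PI_def by (intro prod.cong) auto

lemma improve_full:
  assumes aK: "a \<in> Kset N" and s1: "SS a N = 1" and y0: "0 < y0" and e: "\<And>n. 0 < e n"
  shows "\<exists>b\<in>Kset N. GG y0 e N a < GG y0 e N b"
proof -
  note KF = Kfacts[OF aK]
  define P where "P = {j\<in>{1..N}. a j > 0}"
  have fP: "finite P" unfolding P_def by auto
  have "P \<noteq> {}"
  proof
    assume "P = {}"
    hence "\<And>i. i \<in> {1..N} \<Longrightarrow> a i = 0" using KF(1) unfolding P_def by force
    hence "SS a N = 0" unfolding SS_def by simp
    thus False using s1 by simp
  qed
  define m where "m = Max P"
  have mP: "m \<in> P" unfolding m_def using fP \<open>P \<noteq> {}\<close> by (rule Max_in)
  hence m1: "1 \<le> m" "m \<le> N" "a m > 0" unfolding P_def by auto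
  have zero: "a i = 0" if "m < i" "i \<le> N" for i
  proof -
    have "i \<notin> P" using Max_ge[OF fP, of i] that unfolding m_def by auto
    thus ?thesis using KF(1)[of i] that m1 unfolding P_def by auto
  qed
  have Sm: "SS a m = 1" using SS_extend[of m N a] zero m1 s1 by auto
  obtain m' where m': "m = Suc m'" using m1 by (cases m) auto
  have Sm': "SS a m' = 1 - a m" using Sm by (simp add: m' SS_Suc)
  have PIpos: "PI a m' > 0" unfolding PI_def
  proof (intro prod_pos)
    fix i assume i: "i \<in> {1..m'}"
    have "a i \<le> SS a m'" unfolding SS_def using i KF(1) m1 m' by (intro member_le_sum) auto
    thus "0 < 1 - a i" using Sm' m1 by auto
  qed
  define b where "b = a(m := a m / 2)"
  have bK: "b \<in> Kset N"
  proof -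
    have "(\<Sum>j=1..N. b j) \<le> (\<Sum>j=1..N. a j)" unfolding b_def using m1 by (intro sum_mono) auto
    moreover have "\<forall>j\<in>{1..N}. 0 \<le> b j" using KF(1) m1 unfolding b_def by auto
    ultimately show ?thesis using aK unfolding Kset_def by auto
  qed
  define T where "T = (\<lambda>a n. y0 * a n * (1 - SS a n) * e n * PI a (n-1))"
  have G: "GG y0 e N c = sum (T c) {1..N}" for c unfolding GG_def T_def ..
  have le: "T a n \<le> T b n" if n: "n \<in> {1..N}" for n
  proof -
    consider "n < m" | "n = m" | "n > m" by linarith
    then show ?thesis
    proof cases
      case 1
      hence "SS b n = SS a n" "PI b (n-1) = PI a (n-1)" "b n = a n"
        unfolding b_def by (auto intro!: SS_cong PI_cong)
      thus ?thesis unfolding T_def by simp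
    next
      case 2
      have "T a n = 0" unfolding T_def using 2 Sm by simp
      moreover have "SS b m = SS a m' + a m / 2" "PI b m' = PI a m'" unfolding b_def m'
        by (auto simp: SS_Suc intro!: SS_cong PI_cong)
      hence "T b m = y0 * (a m / 2) * (a m / 2) * e m * PI a m'"
        unfolding T_def using Sm' by (simp add: b_def m')
      moreover have "\<dots> > 0" using y0 m1 e PIpos by simp
      ultimately show ?thesis using 2 by simp
    next
      case 3
      hence "a n = 0" "b n = 0" using zero n m1 unfolding b_def by auto
      thus ?thesis unfolding T_def by simp
    qed
  qed
  have strict: "T a m < T b m"
  proof -
    have "T a m = 0" unfolding T_def using Sm by simp
    moreover have "SS b m = SS a m' + a m / 2" "PI b m' = PI a m'" unfolding b_def m'
      by (auto simp: SS_Suc intro!: SS_cong PI_cong)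
    hence "T b m = y0 * (a m / 2) * (a m / 2) * e m * PI a m'"
      unfolding T_def using Sm' by (simp add: b_def m')
    moreover have "\<dots> > 0" using y0 m1 e PIpos by simp
    ultimately show ?thesis by simp
  qed
  have "GG y0 e N a < GG y0 e N b" unfolding G
    using le strict m1 by (intro sum_strict_mono_ex1) auto
  thus ?thesis using bK by auto
qed

lemma GG_cong: "(\<And>i. 1 \<le> i \<Longrightarrow> i \<le> N \<Longrightarrow> a i = b i) \<Longrightarrow> GG y0 e N a = GG y0 e N b"
  unfolding GG_def
proof (intro sum.cong refl)
  fix n assume H: "\<And>i. 1 \<le> i \<Longrightarrow> i \<le> N \<Longrightarrow> a i = b i" and n: "n \<in> {1..N}"
  have "SS a n = SS b n" "PI a (n-1) = PI b (n-1)" "a n = b n" using H n by (auto intro!: SS_cong PI_cong)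
  thus "y0 * a n * (1 - SS a n) * e n * PI a (n - 1) = y0 * b n * (1 - SS b n) * e n * PI b (n - 1)" by simp
qed

lemma improve_last:
  assumes aK: "a \<in> Kset N" and s1: "SS a N < 1" and aN: "a N = 0" and N1: "1 \<le> N"
    and y0: "0 < y0" and e: "\<And>n. 0 < e n"
  shows "\<exists>b\<in>Kset N. GG y0 e N a < GG y0 e N b"
proof -
  note KF = Kfacts[OF aK]
  obtain N' where N': "N = Suc N'" using N1 by (cases N) auto
  define \<epsilon> where "\<epsilon> = (1 - SS a N) / 2"
  have ep: "\<epsilon> > 0" using s1 unfolding \<epsilon>_def by simp
  define b where "b = a(N := \<epsilon>)"
  have SSN: "SS a N = SS a N'" using aN by (simp add: N' SS_Suc)
  have SbN: "SS b N = SS a N' + \<epsilon>" unfolding b_def N' by (auto simp: SS_Suc intro!: SS_cong)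
  have PIb: "PI b N' = PI a N'" unfolding b_def N' by (auto intro!: PI_cong)
  have PIpos: "PI a N' > 0" using KF(7)[of N'] s1 N' by simp
  have bK: "b \<in> Kset N"
  proof -
    have "(\<Sum>j=1..N. b j) = SS b N" unfolding SS_def ..
    also have "\<dots> = SS a N + \<epsilon>" using SbN SSN by simp
    also have "\<dots> = (SS a N + 1) / 2" unfolding \<epsilon>_def by (simp add: field_simps)
    also have "\<dots> < 1" using s1 by simp
    finally show ?thesis using KF(1) ep unfolding Kset_def b_def by auto
  qed
  define T where "T = (\<lambda>a n. y0 * a n * (1 - SS a n) * e n * PI a (n-1))"
  have G: "GG y0 e N c = sum (T c) {1..N}" for c unfolding GG_def T_def ..
  have strict: "T a N < T b N"
  proof -
    have "T a N = 0" unfolding T_def using aN by simp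
    moreover have "T b N = y0 * \<epsilon> * \<epsilon> * e N * PI a N'"
    proof -
      have X: "SS b N = SS a N + \<epsilon>" using SbN SSN by simp
      have "1 - SS b N = \<epsilon>" unfolding X \<epsilon>_def by (simp add: field_simps)
      moreover have "b N = \<epsilon>" unfolding b_def by simp
      moreover have "N - 1 = N'" using N' by simp
      ultimately show ?thesis unfolding T_def using PIb by simp
    qed
    moreover have "\<dots> > 0" using y0 ep e PIpos by simp
    ultimately show ?thesis by simp
  qed
  have le: "T a n \<le> T b n" if n: "n \<in> {1..N}" for n
  proof (cases "n = N")
    case True thus ?thesis using strict by simp
  next
    case False
    hence "SS b n = SS a n" "PI b (n-1) = PI a (n-1)" "b n = a n"
      unfolding b_def using n by (auto intro!: SS_cong PI_cong)
    thus ?thesis unfolding T_def by simp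
  qed
  have "GG y0 e N a < GG y0 e N b" unfolding G
    using le strict N1 by (intro sum_strict_mono_ex1) auto
  thus ?thesis using bK by auto
qed

lemma improve_later:
  assumes aK: "a \<in> Kset N" and s1: "SS a N < 1" and kj: "1 \<le> k" "k < j" "j \<le> N"
    and ak: "a k > 0" and aj: "a j = 0"
    and y0: "0 < y0" and einc: "\<And>m. 1 \<le> m \<Longrightarrow> m < N \<Longrightarrow> e m < e (Suc m)"
  shows "\<exists>b\<in>Kset N. GG y0 e N a < GG y0 e N b"
proof -
  note KF = Kfacts[OF aK]
  define \<delta> where "\<delta> = (\<lambda>i. if i < 1 then a i else if i = 1 then 0 else if i \<le> j then a (i-1) else a i)"
  have sh: "GG y0 e N \<delta> - GG y0 e N a = (\<Sum>m=1..j-1. y0 * a m * (1 - SS a m) * PI a (m-1) * (e (Suc m) - e m))"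
    using kj aj by (intro shift_GG[OF _ _ _ _ \<delta>_def]) auto
  have "0 < (\<Sum>m=1..j-1. y0 * a m * (1 - SS a m) * PI a (m-1) * (e (Suc m) - e m))"
  proof (rule sum_pos2[where i=k])
    show "k \<in> {1..j-1}" using kj by auto
    have "SS a k < 1" using KF(3)[of k] kj s1 by simp
    moreover have "PI a (k-1) > 0" using KF(7)[of "k-1"] kj s1 by simp
    moreover have "e k < e (Suc k)" using einc kj by simp
    ultimately show "0 < y0 * a k * (1 - SS a k) * PI a (k-1) * (e (Suc k) - e k)"
      using y0 ak by simp
  next
    fix m assume m: "m \<in> {1..j-1}"
    have "m \<le> N" using m kj by auto
    hence "SS a m \<le> 1" using KF(3)[of m] KF(5) by linarith
    moreover have "PI a (m-1) \<ge> 0" using \<open>m \<le> N\<close> by (intro KF(6)) simp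
    moreover have "e m < e (Suc m)" using m kj by (intro einc) auto
    moreover have "a m \<ge> 0" using \<open>m \<le> N\<close> m by (intro KF(1)) auto
    ultimately show "0 \<le> y0 * a m * (1 - SS a m) * PI a (m-1) * (e (Suc m) - e m)"
      using y0 by simp
  qed simp
  hence "GG y0 e N a < GG y0 e N \<delta>" using sh by simp
  moreover have "\<delta> \<in> Kset N"
  proof -
    have "SS \<delta> N = SS a N" using kj aj by (intro shift_SS_N[OF _ _ _ _ \<delta>_def]) auto
    moreover have "0 \<le> \<delta> i" if "i \<in> {1..N}" for i using KF(1)[of "i-1"] KF(1)[of i] that kj unfolding \<delta>_def by (auto simp: le_diff_conv2)
    ultimately show ?thesis using s1 unfolding Kset_def SS_def by auto
  qed
  ultimately show ?thesis by auto
qed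

lemma improve_earlier:
  assumes aK: "a \<in> Kset N" and s1: "SS a N < 1" and jN: "1 \<le> j" "j < N" and aj: "a j = 0"
    and y0: "0 < y0" and e: "\<And>n. 0 < e n" and edec: "\<And>m. 1 \<le> m \<Longrightarrow> m < N \<Longrightarrow> e (Suc m) \<le> e m"
  shows "\<exists>b\<in>Kset N. GG y0 e N a < GG y0 e N b"
proof -
  note KF = Kfacts[OF aK]
  define \<beta> where "\<beta> = (\<lambda>i. if i < j then a i else if i < N then a (Suc i) else 0)"
  define \<delta> where "\<delta> = (\<lambda>i. if i < j then \<beta> i else if i = j then 0 else if i \<le> N then \<beta> (i-1) else \<beta> i)"
  have \<delta>a: "\<delta> i = a i" if "1 \<le> i" "i \<le> N" for i
    using that aj unfolding \<delta>_def \<beta>_def by auto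
  have \<beta>N: "\<beta> N = 0" unfolding \<beta>_def using jN by simp
  have sh: "GG y0 e N \<delta> - GG y0 e N \<beta> = (\<Sum>m=j..N-1. y0 * \<beta> m * (1 - SS \<beta> m) * PI \<beta> (m-1) * (e (Suc m) - e m))"
    using jN \<beta>N by (intro shift_GG[OF _ _ _ _ \<delta>_def]) auto
  have SSb: "SS \<beta> N = SS a N"
  proof -
    have "SS \<delta> N = SS \<beta> N" using jN \<beta>N by (intro shift_SS_N[OF _ _ _ _ \<delta>_def]) auto
    moreover have "SS \<delta> N = SS a N" using \<delta>a by (intro SS_cong) auto
    ultimately show ?thesis by simp
  qed
  have bK: "\<beta> \<in> Kset N"
  proof -
    have "0 \<le> \<beta> i" if "i \<in> {1..N}" for i using KF(1) that jN unfolding \<beta>_def by auto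
    thus ?thesis using SSb KF(5) unfolding Kset_def SS_def by auto
  qed
  note KB = Kfacts[OF bK]
  have "(\<Sum>m=j..N-1. y0 * \<beta> m * (1 - SS \<beta> m) * PI \<beta> (m-1) * (e (Suc m) - e m)) \<le> 0"
  proof (rule sum_nonpos)
    fix m assume m: "m \<in> {j..N-1}"
    have "m \<le> N" using m jN by auto
    hence "SS \<beta> m \<le> 1" using KB(3)[of m] KB(5) by linarith
    moreover have "PI \<beta> (m-1) \<ge> 0" using \<open>m \<le> N\<close> by (intro KB(6)) simp
    moreover have "e (Suc m) \<le> e m" using m jN by (intro edec) auto
    moreover have "\<beta> m \<ge> 0" using \<open>m \<le> N\<close> m jN by (intro KB(1)) auto
    ultimately show "y0 * \<beta> m * (1 - SS \<beta> m) * PI \<beta> (m-1) * (e (Suc m) - e m) \<le> 0"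
      using y0 by (simp add: mult_nonneg_nonpos)
  qed
  moreover have "GG y0 e N \<delta> = GG y0 e N a" using \<delta>a by (intro GG_cong) auto
  ultimately have "GG y0 e N a \<le> GG y0 e N \<beta>" using sh by simp
  moreover obtain b where "b \<in> Kset N" "GG y0 e N \<beta> < GG y0 e N b"
    using improve_last[OF bK _ \<beta>N _ y0, of e] e SSb s1 jN by auto
  ultimately show ?thesis by force
qed

lemma sum_upd: fixes a :: "nat \<Rightarrow> real" shows "finite A \<Longrightarrow> j \<in> A \<Longrightarrow> (\<Sum>i\<in>A. (a(j:=y)) i) = (\<Sum>i\<in>A. a i) + (y - a j)"
proof -
  assume A: "finite A" "j \<in> A"
  have "(\<Sum>i\<in>A. (a(j:=y)) i) = (a(j:=y)) j + (\<Sum>i\<in>A-{j}. (a(j:=y)) i)" using A by (rule sum.remove)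
  also have "(\<Sum>i\<in>A-{j}. (a(j:=y)) i) = (\<Sum>i\<in>A-{j}. a i)" by (intro sum.cong) auto
  also have "(\<Sum>i\<in>A. a i) = a j + (\<Sum>i\<in>A-{j}. a i)" using A by (rule sum.remove)
  ultimately show ?thesis by simp
qed

lemma partial_max:
  assumes aK: "a \<in> Kset N" and mx: "\<forall>\<beta>\<in>Kset N. Gt N y0 r \<rho> t \<beta> \<le> Gt N y0 r \<rho> t a"
    and j: "j \<in> {1..N}" and aj: "a j > 0" and s1: "SS a N < 1"
  shows "partial_zero (Gt N y0 r \<rho> t) j a"
proof -
  note KF = Kfacts[OF aK]
  define f where "f = (\<lambda>s. Gt N y0 r \<rho> t (a(j:=s)))"
  have "f differentiable (at (a j))" unfolding f_def Gt_GG by (rule GG_differentiable)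
  then obtain D where D: "(f has_real_derivative D) (at (a j))" by (auto simp: real_differentiable_def)
  define d where "d = min (a j) (1 - SS a N)"
  have d: "d > 0" using aj s1 unfolding d_def by simp
  have "\<forall>y. \<bar>a j - y\<bar> < d \<longrightarrow> f y \<le> f (a j)"
  proof (intro allI impI)
    fix y assume y: "\<bar>a j - y\<bar> < d"
    hence y0: "y > 0" "y - a j < 1 - SS a N" unfolding d_def by auto
    have "a(j:=y) \<in> Kset N"
    proof -
      have "(\<Sum>i=1..N. (a(j:=y)) i) = (\<Sum>i=1..N. a i) + (y - a j)" using j by (intro sum_upd) auto
      also have "\<dots> < 1" using y0 unfolding SS_def by simp
      finally show ?thesis using KF(1) y0 unfolding Kset_def by auto
    qed
    thus "f y \<le> f (a j)" using mx unfolding f_def by simp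
  qed
  hence "D = 0" using DERIV_local_max[OF D d] by blast
  thus ?thesis using D unfolding partial_zero_def f_def by simp
qed

lemma Gt_cong: "(\<And>i. i \<in> {1..N} \<Longrightarrow> a i = b i) \<Longrightarrow> Gt N y0 r \<rho> t a = Gt N y0 r \<rho> t b"
  unfolding Gt_def by (intro sum.cong refl arg_cong2[where f="(*)"] prod.cong arg_cong2[where f="(-)"]) auto

lemma Gt_cont: "continuous_on UNIV (Gt N y0 r \<rho> t)"
  unfolding Gt_def
  by (intro continuous_intros continuous_on_product_then_coordinatewise[OF continuous_on_id])

lemma exists_max: "\<exists>\<alpha>\<in>Kset N. \<forall>\<beta>\<in>Kset N. Gt N y0 r \<rho> t \<beta> \<le> Gt N y0 r \<rho> t \<alpha>"
proof -
  define S where "S = (\<lambda>i::nat. if i \<in> {1..N} then {0..1::real} else {0})"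
  define C where "C = PiE UNIV S \<inter> {\<alpha>. (\<Sum>j=1..N. \<alpha> j) \<le> 1}"
  have "compactin (product_topology (\<lambda>_. euclidean) UNIV) (PiE UNIV S)"
    unfolding compactin_PiE S_def by auto
  hence "compact (PiE UNIV S)" by (simp add: euclidean_product_topology)
  moreover have "closed {\<alpha>::nat\<Rightarrow>real. (\<Sum>j=1..N. \<alpha> j) \<le> 1}"
    by (intro closed_Collect_le continuous_intros continuous_on_product_then_coordinatewise[OF continuous_on_id])
  ultimately have cC: "compact C" unfolding C_def by auto
  have "(\<lambda>_. 0) \<in> C" unfolding C_def S_def by auto
  hence ne: "C \<noteq> {}" by auto
  obtain a where a: "a \<in> C" "\<forall>y\<in>C. Gt N y0 r \<rho> t y \<le> Gt N y0 r \<rho> t a"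
    using continuous_attains_sup[OF cC ne continuous_on_subset[OF Gt_cont]] by blast
  have CK: "C \<subseteq> Kset N"
  proof
    fix x assume x: "x \<in> C"
    hence xs: "\<And>i. x i \<in> S i" and "(\<Sum>j=1..N. x j) \<le> 1" unfolding C_def by auto
    moreover have "0 \<le> x j" if "j \<in> {1..N}" for j using xs[of j] that unfolding S_def by auto
    ultimately show "x \<in> Kset N" unfolding Kset_def by auto
  qed
  show ?thesis
  proof (intro bexI ballI)
    show "a \<in> Kset N" using a CK by auto
    fix b assume b: "b \<in> Kset N"
    define b' where "b' = (\<lambda>i. if i \<in> {1..N} then b i else 0)"
    have "b' \<in> C"
    proof -
      have "b i \<le> 1" if "i \<in> {1..N}" for i
      proof -
        have "b i \<le> (\<Sum>j=1..N. b j)" using b that unfolding Kset_def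
          by (intro member_le_sum) auto
        thus ?thesis using b unfolding Kset_def by auto
      qed
      moreover have "(\<Sum>j=1..N. b' j) = (\<Sum>j=1..N. b j)" unfolding b'_def by (intro sum.cong) auto
      ultimately show ?thesis using b unfolding C_def S_def b'_def Kset_def by auto
    qed
    moreover have "Gt N y0 r \<rho> t b = Gt N y0 r \<rho> t b'" by (rule Gt_cong) (simp add: b'_def)
    ultimately show "Gt N y0 r \<rho> t b \<le> Gt N y0 r \<rho> t a" using a by auto
  qed
qed

theorem proposition4:
  fixes N :: nat and y0 r \<rho> :: real and t :: "nat \<Rightarrow> real"
  assumes "1 \<le> N" and "0 < y0"
    and "0 \<le> t 1" and "\<forall>i\<in>{1..<N}. t i < t (i+1)"
  shows "(\<exists>\<alpha>\<in>Kset N. \<forall>\<beta>\<in>Kset N. Gt N y0 r \<rho> t \<beta> \<le> Gt N y0 r \<rho> t \<alpha>)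
    \<and> (\<forall>\<alpha>\<in>Kset N. (\<forall>\<beta>\<in>Kset N. Gt N y0 r \<rho> t \<beta> \<le> Gt N y0 r \<rho> t \<alpha>) \<longrightarrow>
         ((inIntK N 0 \<alpha> \<and> \<not> (\<exists>n\<in>{1..N-1}. (\<forall>j\<in>{1..n}. \<alpha> j = 0) \<and> inIntK N n \<alpha>))
          \<or> (\<not> inIntK N 0 \<alpha> \<and> (\<exists>n\<in>{1..N-1}. (\<forall>j\<in>{1..n}. \<alpha> j = 0) \<and> inIntK N n \<alpha>)))
       \<and> (inIntK N 0 \<alpha> \<longrightarrow> (\<forall>j\<in>{1..N}. partial_zero (Gt N y0 r \<rho> t) j \<alpha>))
       \<and> (\<forall>n\<in>{1..N-1}. ((\<forall>j\<in>{1..n}. \<alpha> j = 0) \<and> inIntK N n \<alpha>) \<longrightarrow>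
            (\<forall>j\<in>{n+1..N}. \<alpha> j \<noteq> 0 \<and> partial_zero (Gt N y0 r \<rho> t) j \<alpha>)))"
proof (intro conjI ballI impI)
  show "\<exists>\<alpha>\<in>Kset N. \<forall>\<beta>\<in>Kset N. Gt N y0 r \<rho> t \<beta> \<le> Gt N y0 r \<rho> t \<alpha>" by (rule exists_max)
next
  fix \<alpha> assume aK: "\<alpha> \<in> Kset N" and mx: "\<forall>\<beta>\<in>Kset N. Gt N y0 r \<rho> t \<beta> \<le> Gt N y0 r \<rho> t \<alpha>"
  note KF = Kfacts[OF aK]
  define e where "e = (\<lambda>n. exp (t n * (r - \<rho>)))"
  have e: "\<And>n. 0 < e n" unfolding e_def by simp
  have NI: "\<not> (\<exists>b\<in>Kset N. GG y0 e N \<alpha> < GG y0 e N b)"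
    using mx unfolding Gt_GG e_def by force
  have s1: "SS \<alpha> N < 1"
  proof (rule ccontr)
    assume "\<not> SS \<alpha> N < 1"
    hence "SS \<alpha> N = 1" using KF(5) by simp
    thus False using improve_full[OF aK _ assms(2), of e] e NI by auto
  qed
  show "partial_zero (Gt N y0 r \<rho> t) j \<alpha>" if "inIntK N 0 \<alpha>" "j \<in> {1..N}" for j
    using that partial_max[OF aK mx _ _ s1] unfolding inIntK_def by auto
  show "\<alpha> j \<noteq> 0"
    if "n \<in> {1..N-1}" "(\<forall>j\<in>{1..n}. \<alpha> j = 0) \<and> inIntK N n \<alpha>" "j \<in> {n+1..N}" for n j
    using that unfolding inIntK_def by force
  show "partial_zero (Gt N y0 r \<rho> t) j \<alpha>"
    if "n \<in> {1..N-1}" "(\<forall>j\<in>{1..n}. \<alpha> j = 0) \<and> inIntK N n \<alpha>" "j \<in> {n+1..N}" for n j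
    using that partial_max[OF aK mx _ _ s1] unfolding inIntK_def by auto
  have aN: "\<alpha> N > 0"
  proof (rule ccontr)
    assume "\<not> \<alpha> N > 0"
    hence "\<alpha> N = 0" using KF(1)[of N] assms(1) by simp
    thus False using improve_last[OF aK s1 _ assms(1,2), of e] e NI by auto
  qed
  have nozero: "\<alpha> k = 0" if j: "j \<in> {1..N}" "\<alpha> j = 0" and k: "1 \<le> k" "k < j" for j k
  proof (cases "r > \<rho>")
    case True
    have einc: "e m < e (Suc m)" if "1 \<le> m" "m < N" for m
    proof -
      have "t m < t (Suc m)" using assms(4) that by auto
      thus ?thesis unfolding e_def using True by simp
    qed
    show ?thesis
    proof (rule ccontr)
      assume "\<alpha> k \<noteq> 0"
      hence "\<alpha> k > 0" using KF(1)[of k] k j by auto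
      thus False using improve_later[OF aK s1 k(1) k(2) _ _ j(2) assms(2), of e] einc j NI by auto
    qed
  next
    case False
    have edec: "e (Suc m) \<le> e m" if "1 \<le> m" "m < N" for m
    proof -
      have "t m < t (Suc m)" using assms(4) that by auto
      hence "t (Suc m) * (r - \<rho>) \<le> t m * (r - \<rho>)" using False by (intro mult_right_mono_neg) auto
      thus ?thesis unfolding e_def by simp
    qed
    have "j < N" using j aN by (cases "j = N") auto
    thus ?thesis using improve_earlier[where e=e, OF aK s1 _ _ j(2) assms(2) e] edec j NI by auto
  qed
  define Z where "Z = {j\<in>{1..N}. \<alpha> j = 0}"
  have fZ: "finite Z" unfolding Z_def by auto
  define n where "n = (if Z = {} then 0 else Max Z)"
  have nN: "n < N"
  proof (cases "Z = {}")
    case True thus ?thesis using assms(1) unfolding n_def by simp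
  next
    case False
    hence "n \<in> Z" unfolding n_def using Max_in[OF fZ] by simp
    thus ?thesis using aN unfolding Z_def by (cases "n = N") auto
  qed
  have zeros: "\<alpha> j = 0" if "j \<in> {1..n}" for j
  proof -
    have "Z \<noteq> {}" using that unfolding n_def by (cases "Z = {}") auto
    hence "n \<in> Z" unfolding n_def using Max_in[OF fZ] by simp
    hence "n \<in> {1..N}" "\<alpha> n = 0" unfolding Z_def by auto
    thus ?thesis using nozero[of n j] that by (cases "j = n") auto
  qed
  have pos: "\<alpha> j > 0" if "j \<in> {n+1..N}" for j
  proof -
    have "j \<notin> Z"
    proof
      assume "j \<in> Z"
      hence "j \<le> n" unfolding n_def using Max_ge[OF fZ] by auto
      thus False using that by auto
    qed
    thus ?thesis using KF(1)[of j] that unfolding Z_def by force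
  qed
  have sumn: "(\<Sum>j=n+1..N. \<alpha> j) < 1"
  proof -
    have "(\<Sum>j=n+1..N. \<alpha> j) \<le> (\<Sum>j=1..N. \<alpha> j)" using KF(1) by (intro sum_mono2) auto
    thus ?thesis using s1 unfolding SS_def by simp
  qed
  have intn: "inIntK N n \<alpha>" unfolding inIntK_def using pos sumn by auto
  show "(inIntK N 0 \<alpha> \<and> \<not> (\<exists>n\<in>{1..N-1}. (\<forall>j\<in>{1..n}. \<alpha> j = 0) \<and> inIntK N n \<alpha>))
          \<or> (\<not> inIntK N 0 \<alpha> \<and> (\<exists>n\<in>{1..N-1}. (\<forall>j\<in>{1..n}. \<alpha> j = 0) \<and> inIntK N n \<alpha>))"
  proof (cases "n = 0")
    case True
    hence "inIntK N 0 \<alpha>" using intn by simp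
    moreover have "\<alpha> 1 > 0" using pos[of 1] True assms(1) by simp
    ultimately show ?thesis by auto
  next
    case False
    hence "\<alpha> 1 = 0" using zeros[of 1] by simp
    hence "\<not> inIntK N 0 \<alpha>" unfolding inIntK_def using assms(1) by force
    moreover have "n \<in> {1..N-1}" using False nN by auto
    ultimately show ?thesis using zeros intn by blast
  qed
qed

end
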